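(* For every $n\in\mathbb{N}$ and $\xi>0$ there is an interior point fingerprinting code for $n$ users with completeness error $\gamma=0$ and soundness error $\xi$ on a totally ordered domain $X_n$ of size $|X_n|\le\mathrm{tower}^{(n+\log^*(2n^2/\xi))}(1)$.
   Context: $\mathrm{tower}^{(0)}(x)=x$ and $\mathrm{tower}^{(k)}(x)=2^{\mathrm{tower}^{(k-1)}(x)}$; $\log^*$ is the iterated base-2 logarithm. An interior point fingerprinting code over a totally ordered $X$ for $n$ users is a pair of randomized algorithms $(\mathrm{Gen},\mathrm{Trace})$, possibly sharing state: $\mathrm{Gen}$ samples a codebook $C=(x_1,\dots,x_n)\in X^n$; $\mathrm{Trace}(x)$ outputs a user $i\in\{1,\dots,n\}$ or $\bot$. For a coalition $T\subseteq\{1,\dots,n\}$ and pirate algorithm $\mathcal{A}:X^{|T|}\to X$ given $C|_T=(x_i)_{i\in T}$, the output $x=\mathcal{A}(C|_T)$ is feasible if $\min_{i\in T}x_i\le x\le\max_{i\in T}x_i$. Completeness error $\gamma$ and soundness error $\xi$ mean: for all $T$ and all $\mathcal{A}$, $\Pr[\mathrm{Trace}(x)=\bot\wedge x\text{ feasible}]\le\gamma$ and $\Pr[\mathrm{Trace}(x)\in\{1,\dots,n\}\setminus T]\le\xi$, over the coins of $\mathrm{Gen},\mathrm{Trace},\mathcal{A}$. *)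

theory Defs
  imports "HOL-Probability.Probability_Mass_Function"
begin

fun tower :: "nat \<Rightarrow> nat \<Rightarrow> nat" where
  "tower 0 x = x"
| "tower (Suc k) x = 2 ^ tower k x"

definition log_star :: "real \<Rightarrow> nat" where
  "log_star x = (LEAST k. ((\<lambda>y. log 2 y) ^^ k) x \<le> 1)"

text \<open>Domain X = {..<N} (a totally ordered set of size N), users {1..n}.
  Gen is a joint distribution on (shared state, codebook); the codebook is C i for i in {1..n}.
  Trace s x is a randomized output: None = bottom, Some i = user i.
  The pirate A sees only the restriction of C to T (other entries zeroed out).\<close>

definition restr :: "(nat \<Rightarrow> nat) \<Rightarrow> nat set \<Rightarrow> nat \<Rightarrow> nat" where
  "restr C T = (\<lambda>i. if i \<in> T then C i else 0)"

definition feasible :: "(nat \<Rightarrow> nat) \<Rightarrow> nat set \<Rightarrow> nat \<Rightarrow> bool" where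
  "feasible C T x \<longleftrightarrow> (\<exists>i\<in>T. C i \<le> x) \<and> (\<exists>j\<in>T. x \<le> C j)"

definition ipfc_experiment ::
  "('s \<times> (nat \<Rightarrow> nat)) pmf \<Rightarrow> ('s \<Rightarrow> nat \<Rightarrow> nat option pmf) \<Rightarrow> nat set
   \<Rightarrow> ((nat \<Rightarrow> nat) \<Rightarrow> nat pmf) \<Rightarrow> ((nat \<Rightarrow> nat) \<times> nat \<times> nat option) pmf" where
  "ipfc_experiment Gen Trace T A =
     bind_pmf Gen (\<lambda>(s, C).
     bind_pmf (A (restr C T)) (\<lambda>x.
     bind_pmf (Trace s x) (\<lambda>t. return_pmf (C, x, t))))"

definition is_ipfc ::
  "nat \<Rightarrow> nat \<Rightarrow> real \<Rightarrow> real \<Rightarrow> ('s \<times> (nat \<Rightarrow> nat)) pmf \<Rightarrow> ('s \<Rightarrow> nat \<Rightarrow> nat option pmf) \<Rightarrow> bool" where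
  "is_ipfc n N \<gamma> \<xi> Gen Trace \<longleftrightarrow>
     (\<forall>(s, C) \<in> set_pmf Gen. \<forall>i\<in>{1..n}. C i < N) \<and>
     (\<forall>s x. set_pmf (Trace s x) \<subseteq> insert None (Some ` {1..n})) \<and>
     (\<forall>T A. T \<subseteq> {1..n} \<and> (\<forall>c. set_pmf (A c) \<subseteq> {..<N}) \<longrightarrow>
        measure_pmf.prob (ipfc_experiment Gen Trace T A)
           {(C, x, t). t = None \<and> feasible C T x} \<le> \<gamma> \<and>
        measure_pmf.prob (ipfc_experiment Gen Trace T A)
           {(C, x, t). \<exists>i. t = Some i \<and> i \<in> {1..n} - T} \<le> \<xi>)"

end

theory Submission
  imports Defs
begin


lemma agree_mono:
  fixes x r :: nat
  assumes "x div 2^a = r div 2^a" "a \<le> b"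
  shows "x div 2^b = r div 2^b"
proof -
  have "2^b = (2::nat)^a * 2^(b-a)" using assms(2) by (simp add: power_add[symmetric])
  then show ?thesis using assms(1) by (simp add: div_mult2_eq)
qed

definition lvl :: "nat \<Rightarrow> nat \<Rightarrow> nat" where
  "lvl r x = (LEAST j. x div 2^j = r div 2^j)"

lemma agree_ex: "\<exists>j. (x::nat) div 2^j = r div 2^j"
proof -
  have "x < 2^(x+r)" "r < 2^(x+r)"
    using less_exp[of "x+r"] by linarith+
  then have "x div 2^(x+r) = 0" "r div 2^(x+r) = 0" by (simp_all only: div_less)
  then show ?thesis by metis
qed

lemma lvl_le_iff: "lvl r x \<le> j \<longleftrightarrow> x div 2^j = r div 2^j"
proof
  assume "lvl r x \<le> j"
  moreover have "x div 2^lvl r x = r div 2^lvl r x"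
    unfolding lvl_def by (rule LeastI_ex[OF agree_ex])
  ultimately show "x div 2^j = r div 2^j" using agree_mono by blast
next
  assume "x div 2^j = r div 2^j"
  then show "lvl r x \<le> j" unfolding lvl_def by (rule Least_le)
qed

lemma lvl_self: "lvl r r = 0"
  using lvl_le_iff[of r r 0] by simp

definition wcode :: "nat \<Rightarrow> nat \<Rightarrow> nat \<Rightarrow> nat" where
  "wcode D r y = (let j = D - 1 - y in (r div 2^(j+1)) * 2^(j+1) + (1 - r div 2^j mod 2) * 2^j)"

lemma wcode_div:
  assumes "j = D - 1 - y"
  shows "wcode D r y div 2^(j+1) = r div 2^(j+1)"
    and "wcode D r y div 2^j \<noteq> r div 2^j"
proof -
  have b: "(1 - r div 2^j mod 2) * 2^j < (2::nat)^(j+1)" by auto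
  show "wcode D r y div 2^(j+1) = r div 2^(j+1)"
    unfolding wcode_def Let_def assms[symmetric] using b
    by (simp add: div_add1_eq[of "r div 2 ^ (j + 1) * 2 ^ (j + 1)"] del: power_Suc)
  have e1: "wcode D r y div 2^j = 2 * (r div 2^(j+1)) + (1 - r div 2^j mod 2)"
    unfolding wcode_def Let_def assms[symmetric]
    by (simp add: mult.commute mult.left_commute)
  have e3: "r div 2^(j+1) = r div 2^j div 2" by (simp only: power_add power_one_right div_mult2_eq)
  have e2: "r div 2^j = 2 * (r div 2^(j+1)) + r div 2^j mod 2"
    unfolding e3 by simp
  show "wcode D r y div 2^j \<noteq> r div 2^j"
    using e1 e2 by (metis add_left_cancel mod2_eq_if diff_zero diff_self_eq_0 one_neq_zero)
qed

lemma lvl_wcode: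
  assumes "y < D"
  shows "lvl r (wcode D r y) = D - y"
proof -
  define j where "j = D - 1 - y"
  have "lvl r (wcode D r y) \<le> j + 1" using wcode_div(1)[OF j_def] lvl_le_iff by blast
  moreover have "\<not> lvl r (wcode D r y) \<le> j" using wcode_div(2)[OF j_def] lvl_le_iff by blast
  ultimately show ?thesis using assms j_def by linarith
qed

lemma wcode_less:
  assumes "y < D" "r < 2^D"
  shows "wcode D r y < 2^D"
proof -
  have "wcode D r y div 2^(D-1-y+1) = r div 2^(D-1-y+1)" by (rule wcode_div(1)) (rule refl)
  moreover have "D-1-y+1 \<le> D" using assms(1) by linarith
  ultimately have "wcode D r y div 2^D = r div 2^D" by (rule agree_mono)
  then show ?thesis using assms(2) by (simp add: div_eq_0_iff)
qed

lemma wcode_dep: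
  assumes "J \<le> D - 1 - y" "r div 2^J = r' div 2^J"
  shows "wcode D r y = wcode D r' y"
proof -
  define j where "j = D - 1 - y"
  have "r div 2^j = r' div 2^j" "r div 2^(j+1) = r' div 2^(j+1)"
    using agree_mono[OF assms(2), of j] agree_mono[OF assms(2), of "j+1"] assms(1) j_def by auto
  then show ?thesis unfolding wcode_def Let_def j_def[symmetric] by simp
qed

fun NN :: "nat \<Rightarrow> nat \<Rightarrow> nat" where
  "NN e 0 = 1"
| "NN e (Suc k) = 2 ^ (NN e k + (2^e - 1) + e)"

definition DD :: "nat \<Rightarrow> nat \<Rightarrow> nat" where
  "DD e m = NN e m + (2^e - 1)"

definition codeS :: "nat \<Rightarrow> nat \<Rightarrow> (nat \<Rightarrow> nat) \<Rightarrow> nat \<Rightarrow> nat \<Rightarrow> nat" where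
  "codeS e m y r = (\<lambda>i. if 1 \<le> i \<and> i \<le> m then wcode (DD e m) r (y i) * 2^e
       else if i = Suc m then r * 2^e else 0)"

fun G :: "nat \<Rightarrow> nat \<Rightarrow> (nat \<Rightarrow> nat) pmf" where
  "G e 0 = return_pmf (\<lambda>_. 0)"
| "G e (Suc m) = bind_pmf (G e m) (\<lambda>y. map_pmf (codeS e m y) (pmf_of_set {..<2^DD e m}))"

fun tr :: "nat \<Rightarrow> nat \<Rightarrow> (nat \<Rightarrow> nat) \<Rightarrow> nat \<Rightarrow> nat option" where
  "tr e 0 C x = None"
| "tr e (Suc m) C x = (let D = DD e m; r = C (Suc m) div 2^e;
      y = (\<lambda>i. if 1 \<le> i \<and> i \<le> m then D - lvl r (C i div 2^e) else 0);
      M = Max (insert 0 (y ` {1..m})); z = D - lvl r (x div 2^e)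
    in if M + (2^e - 1) < z then Some (Suc m) else tr e m y z)"

lemma NN_le_DD: "NN e m \<le> DD e m" unfolding DD_def by (rule le_add1)

lemma set_G_Suc: "C \<in> set_pmf (G e (Suc m)) \<longleftrightarrow>
   (\<exists>y r. y \<in> set_pmf (G e m) \<and> r < 2^DD e m \<and> C = codeS e m y r)"
proof -
  have "0 \<in> {..<(2::nat)^DD e m}" by simp
  then have ne: "{..<(2::nat)^DD e m} \<noteq> {}" by blast
  show ?thesis by (auto simp: set_pmf_of_set[OF ne])
qed

lemma G_supp:
  "C \<in> set_pmf (G e k) \<Longrightarrow> (\<forall>i. (i = 0 \<or> k < i) \<longrightarrow> C i = 0) \<and> (\<forall>i\<in>{1..k}. C i < NN e k \<and> 2^e dvd C i)"
proof (induction k arbitrary: C)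
  case 0
  then show ?case by simp
next
  case (Suc m)
  then obtain y r where y: "y \<in> set_pmf (G e m)" and r: "r < 2^DD e m" and C: "C = codeS e m y r"
    using set_G_Suc by blast
  have yl: "\<forall>i\<in>{1..m}. y i < DD e m" using Suc.IH[OF y] NN_le_DD[of e m] by fastforce
  have NS: "NN e (Suc m) = 2^(DD e m) * 2^e" by (simp add: DD_def power_add)
  have lt: "C i < NN e (Suc m)" if "i \<in> {1..Suc m}" for i
  proof (cases "i \<le> m")
    case True
    then have w: "wcode (DD e m) r (y i) < 2^DD e m" using wcode_less yl r that by auto
    have "C i = wcode (DD e m) r (y i) * 2^e" using True that unfolding C codeS_def by simp
    then show ?thesis unfolding NS using w by simp
  next
    case False
    then have "C i = r * 2^e" using that unfolding C codeS_def by simp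
    then show ?thesis unfolding NS using r by simp
  qed
  have z: "C i = 0" if "i = 0 \<or> Suc m < i" for i using that unfolding C codeS_def by auto
  have d: "2^e dvd C i" for i unfolding C codeS_def by auto
  show ?case using z d lt by blast
qed

lemma tr_code:
  assumes y: "y \<in> set_pmf (G e m)" and r: "r < 2^DD e m"
  shows "tr e (Suc m) (codeS e m y r) x =
    (if Max (insert 0 (y`{1..m})) + (2^e-1) < DD e m - lvl r (x div 2^e) then Some (Suc m)
     else tr e m y (DD e m - lvl r (x div 2^e)))"
proof -
  have ys: "\<forall>i. (i = 0 \<or> m < i) \<longrightarrow> y i = 0" "\<forall>i\<in>{1..m}. y i < DD e m"
    using G_supp[OF y] NN_le_DD[of e m] by fastforce+
  have "(\<lambda>i. if 1 \<le> i \<and> i \<le> m then DD e m - lvl r (codeS e m y r i div 2^e) else 0) = y"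
  proof
    fix i show "(if 1 \<le> i \<and> i \<le> m then DD e m - lvl r (codeS e m y r i div 2^e) else 0) = y i"
    proof (cases "1 \<le> i \<and> i \<le> m")
      case True
      then have "y i < DD e m" using ys by auto
      then show ?thesis using True lvl_wcode[of "y i" "DD e m" r] by (simp add: codeS_def)
    next
      case False
      then have "i = 0 \<or> m < i" by auto
      then show ?thesis using False ys by auto
    qed
  qed
  moreover have "codeS e m y r (Suc m) div 2^e = r" by (simp add: codeS_def)
  ultimately show ?thesis by (simp only: tr.simps Let_def)
qed

lemma tr_range: "tr e k C x \<in> insert None (Some ` {1..k})"
proof (induction k arbitrary: C x)
  case 0 then show ?case by simp
next
  case (Suc m)
  have h: "\<And>Y Z. tr e m Y Z \<in> insert None (Some ` {1..Suc m})" using Suc.IH by fastforce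
  show ?case using h by (simp add: Let_def)
qed

lemma between_agree:
  fixes a b x r :: nat
  assumes "a \<le> x" "x \<le> b" "a div 2^L = r div 2^L" "b div 2^L = r div 2^L"
  shows "x div 2^L = r div 2^L"
proof -
  have "a div 2^L \<le> x div 2^L" "x div 2^L \<le> b div 2^L" using assms(1,2) by (auto intro: div_le_mono)
  then show ?thesis using assms(3,4) by linarith
qed

lemma div_le_of_le_pad:
  fixes x c :: nat
  assumes "x \<le> c * 2^e + (2^e - 1)"
  shows "x div 2^e \<le> c"
proof -
  have p: "2^e - 1 < (2::nat)^e" by simp
  have q: "(c+1) * 2^e = c * 2^e + (2::nat)^e" by (simp add: algebra_simps)
  have "x < (c+1) * 2^e" using assms p q by linarith
  then have "x div 2^e < c + 1" by (rule less_mult_imp_div_less)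
  then show ?thesis by simp
qed

lemma tr_complete:
  "C \<in> set_pmf (G e k) \<Longrightarrow> i \<in> {1..k} \<Longrightarrow> j \<in> {1..k} \<Longrightarrow> C i \<le> x \<Longrightarrow> x \<le> C j + (2^e - 1)
   \<Longrightarrow> tr e k C x \<noteq> None"
proof (induction k arbitrary: C x i j)
  case 0 then show ?case by simp
next
  case (Suc m)
  define D where "D = DD e m"
  obtain y r where y: "y \<in> set_pmf (G e m)" and r0: "r < 2^DD e m" and C: "C = codeS e m y r"
    using Suc.prems(1) set_G_Suc by blast
  have r: "r < 2^D" using r0 D_def by simp
  have yN: "\<And>i. i \<in> {1..m} \<Longrightarrow> y i < NN e m" using G_supp[OF y] by blast
  have ys: "\<And>i. i \<in> {1..m} \<Longrightarrow> y i < D"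
    using yN NN_le_DD[of e m] unfolding D_def by (meson order_less_le_trans)
  define Y where "Y = (\<lambda>i. if i \<le> m then y i else D)"
  have cd: "C i div 2^e = (if i \<le> m then wcode D r (y i) else r)" if "i \<in> {1..Suc m}" for i
  proof (cases "i \<le> m")
    case True then show ?thesis using that unfolding C codeS_def D_def by simp
  next
    case False then have "i = Suc m" using that by simp
    then show ?thesis unfolding C codeS_def D_def by simp
  qed
  have lv: "lvl r (C i div 2^e) = D - Y i" and YD: "Y i \<le> D" if "i \<in> {1..Suc m}" for i
  proof -
    show "lvl r (C i div 2^e) = D - Y i"
    proof (cases "i \<le> m")
      case True
      then have "y i < D" using ys that by simp
      then show ?thesis using True cd[OF that] lvl_wcode[of "y i" D r] unfolding Y_def by simp
    next
      case False
      then show ?thesis using cd[OF that] lvl_self[of r] unfolding Y_def by simp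
    qed
    show "Y i \<le> D"
    proof (cases "i \<le> m")
      case True
      then have "y i < D" using ys that by simp
      then show ?thesis using True unfolding Y_def by simp
    qed (simp add: Y_def)
  qed
  define x' where "x' = x div 2^e"
  have a: "C i div 2^e \<le> x'" unfolding x'_def using Suc.prems(4) by (rule div_le_mono)
  have dv: "2^e dvd C j" using G_supp[OF Suc.prems(1)] Suc.prems(3) by blast
  then obtain c where c: "C j = c * 2^e" by (metis dvd_def mult.commute)
  have b1: "x div 2^e \<le> c"
    by (rule div_le_of_le_pad) (use Suc.prems(5) c in simp)
  have b2: "C j div 2^e = c" using c by simp
  have b: "x' \<le> C j div 2^e" unfolding x'_def b2 by (rule b1)
  define L where "L = max (lvl r (C i div 2^e)) (lvl r (C j div 2^e))"
  have "lvl r (C i div 2^e) \<le> L" "lvl r (C j div 2^e) \<le> L" unfolding L_def by simp_all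
  then have "C i div 2^e div 2^L = r div 2^L" "C j div 2^e div 2^L = r div 2^L"
    using lvl_le_iff by blast+
  then have "x' div 2^L = r div 2^L" using between_agree a b by blast
  then have lx: "lvl r x' \<le> L" using lvl_le_iff by blast
  define z where "z = D - lvl r x'"
  have zge: "min (Y i) (Y j) \<le> z"
    using lx lv[OF Suc.prems(2)] lv[OF Suc.prems(3)] YD[OF Suc.prems(2)] YD[OF Suc.prems(3)]
    unfolding z_def L_def by linarith
  define M where "M = Max (insert 0 (y`{1..m}))"
  have tc: "tr e (Suc m) C x = (if M + (2^e-1) < z then Some (Suc m) else tr e m y z)"
    unfolding C M_def z_def x'_def D_def by (rule tr_code[OF y r0])
  show ?case
  proof (cases "M + (2^e-1) < z")
    case True then show ?thesis using tc by simp
  next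
    case False
    have DM: "M + (2^e - 1) < D"
    proof -
      have "M \<in> insert 0 (y`{1..m})" unfolding M_def by (rule Max_in) auto
      then have "M < NN e m \<or> M = 0" using yN by blast
      moreover have "0 < NN e m" by (cases m) auto
      ultimately show ?thesis unfolding D_def DD_def by linarith
    qed
    have zD: "z < D" using False DM by linarith
    have h: "k \<in> {1..m} \<and> y k \<le> z" if "Y k \<le> z" "k \<in> {1..Suc m}" for k
    proof (cases "k \<le> m")
      case True then show ?thesis using that unfolding Y_def by simp
    next
      case False then show ?thesis using that zD unfolding Y_def by simp
    qed
    have "Y i \<le> z \<or> Y j \<le> z" using zge by (simp add: min_le_iff_disj)
    then have "\<exists>i0. i0 \<in> {1..m} \<and> y i0 \<le> z" using h Suc.prems(2,3) by blast
    then obtain i0 where i0: "i0 \<in> {1..m}" "y i0 \<le> z" by blast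
    have "m \<ge> 1" using i0 by auto
    have "\<exists>j0\<in>{1..m}. M \<le> y j0"
    proof -
      have "M \<in> insert 0 (y`{1..m})" unfolding M_def by (rule Max_in) auto
      then show ?thesis using \<open>m \<ge> 1\<close> by (auto intro: bexI[of _ 1])
    qed
    then obtain j0 where j0: "j0 \<in> {1..m}" "M \<le> y j0" by auto
    have "tr e m y z \<noteq> None"
      by (rule Suc.IH[OF y i0(1) j0(1) i0(2)]) (use False j0 in linarith)
    then show ?thesis using tc False by simp
  qed
qed




lemma pow_ne: "{..<(2::nat)^k} \<noteq> {}"
proof -
  have "0 \<in> {..<(2::nat)^k}" by simp
  then show ?thesis by blast
qed

lemma prob_bind_le:
  assumes "\<And>x. x \<in> set_pmf p \<Longrightarrow> measure_pmf.prob (f x) S \<le> c" "0 \<le> c"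
  shows "measure_pmf.prob (bind_pmf p f) S \<le> c"
proof -
  have "emeasure (measure_pmf (bind_pmf p f)) S = (\<integral>\<^sup>+x. emeasure (measure_pmf (f x)) S \<partial>measure_pmf p)"
    by simp
  also have "\<dots> \<le> (\<integral>\<^sup>+x. ennreal c \<partial>measure_pmf p)"
  proof (rule nn_integral_mono_AE)
    show "AE x in measure_pmf p. emeasure (measure_pmf (f x)) S \<le> ennreal c"
      using assms by (auto simp: AE_measure_pmf_iff measure_pmf.emeasure_eq_measure)
  qed
  also have "\<dots> = ennreal c" by (simp add: measure_pmf.emeasure_space_1)
  finally have "ennreal (measure_pmf.prob (bind_pmf p f) S) \<le> ennreal c"
    by (simp add: measure_pmf.emeasure_eq_measure)
  then show ?thesis using assms(2) by (simp add: ennreal_le_iff)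
qed

lemma pair_pmf_of_set:
  assumes "finite A" "A \<noteq> {}" "finite B" "B \<noteq> {}"
  shows "pair_pmf (pmf_of_set A) (pmf_of_set B) = pmf_of_set (A \<times> B)"
proof (rule pmf_eqI)
  fix ab :: "'a \<times> 'b"
  obtain a b where ab: "ab = (a, b)" by (cases ab)
  have "A \<times> B \<noteq> {}" "finite (A \<times> B)" using assms by auto
  then show "pmf (pair_pmf (pmf_of_set A) (pmf_of_set B)) ab = pmf (pmf_of_set (A \<times> B)) ab"
    unfolding ab pmf_pair using assms by (simp add: card_cartesian_product indicator_def)
qed

lemma uniform_split:
  assumes "J \<le> D"
  shows "pmf_of_set {..<(2::nat)^D} =
    map_pmf (\<lambda>(h,l). h * 2^J + l) (pair_pmf (pmf_of_set {..<(2::nat)^(D-J)}) (pmf_of_set {..<(2::nat)^J}))"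
proof -
  let ?f = "\<lambda>(h::nat,l::nat). h * 2^J + l"
  have D: "(2::nat)^D = 2^(D-J) * 2^J" using assms by (simp add: power_add[symmetric])
  have inj: "inj_on ?f ({..<2^(D-J)} \<times> {..<2^J})"
  proof (rule inj_onI, clarsimp)
    fix h l h' l' :: nat
    assume "l < 2^J" "l' < 2^J" "h * 2^J + l = h' * 2^J + l'"
    moreover have "(h * 2^J + l) div 2^J = h" "(h' * 2^J + l') div 2^J = h'"
      using \<open>l < 2^J\<close> \<open>l' < 2^J\<close> by simp_all
    ultimately show "h = h' \<and> l = l'" by auto
  qed
  have img: "?f ` ({..<2^(D-J)} \<times> {..<2^J}) = {..<2^D}"
  proof
    show "?f ` ({..<2^(D-J)} \<times> {..<2^J}) \<subseteq> {..<2^D}"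
    proof clarsimp
      fix h l :: nat assume h: "h < 2^(D-J)" and l: "l < 2^J"
      have "h * 2^J + l < (h+1) * 2^J" using l by simp
      also have "\<dots> \<le> 2^(D-J) * 2^J" using h by (intro mult_right_mono) auto
      finally show "h * 2^J + l < 2^D" using D by simp
    qed
    show "{..<2^D} \<subseteq> ?f ` ({..<2^(D-J)} \<times> {..<2^J})"
    proof
      fix n assume n: "n \<in> {..<(2::nat)^D}"
      have "n div 2^J < 2^(D-J)" using n D by (simp add: less_mult_imp_div_less)
      moreover have "n mod 2^J < 2^J" by simp
      moreover have "n = ?f (n div 2^J, n mod 2^J)" using div_mult_mod_eq[of n "2^J"] by simp
      ultimately show "n \<in> ?f ` ({..<2^(D-J)} \<times> {..<2^J})" by blast
    qed
  qed
  have "pair_pmf (pmf_of_set {..<(2::nat)^(D-J)}) (pmf_of_set {..<(2::nat)^J}) =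
        pmf_of_set ({..<2^(D-J)} \<times> {..<2^J})"
    by (rule pair_pmf_of_set) (simp_all add: pow_ne)
  moreover have "({..<(2::nat)^(D-J)} \<times> {..<(2::nat)^J}) \<noteq> {}" using pow_ne by blast
  ultimately show ?thesis using map_pmf_of_set_inj[OF inj] img by simp
qed




lemma card_div_bound:
  fixes h J K c :: nat
  shows "card ({..<(2::nat)^J} \<inter> {l. c = (h*2^J+l) div 2^K}) \<le> 2^K"
proof -
  let ?A = "{..<(2::nat)^J} \<inter> {l. c = (h*2^J+l) div 2^K}"
  let ?f = "\<lambda>l. (h*2^J+l) mod 2^K"
  have "inj_on ?f ?A"
  proof (rule inj_onI)
    fix l1 l2 assume a: "l1 \<in> ?A" "l2 \<in> ?A" "?f l1 = ?f l2"
    have "h*2^J+l1 = (h*2^J+l1) div 2^K * 2^K + (h*2^J+l1) mod 2^K" by (rule div_mult_mod_eq[symmetric])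
    also have "\<dots> = (h*2^J+l2) div 2^K * 2^K + (h*2^J+l2) mod 2^K" using a by simp
    also have "\<dots> = h*2^J+l2" by (rule div_mult_mod_eq)
    finally show "l1 = l2" by simp
  qed
  moreover have "?f ` ?A \<subseteq> {..<2^K}" by auto
  ultimately have "card ?A \<le> card {..<(2::nat)^K}" by (intro card_inj_on_le) auto
  then show ?thesis by simp
qed

lemma guess_bound:
  fixes F :: "nat \<Rightarrow> 'a pmf" and g :: "'a \<Rightarrow> nat"
  assumes "J \<le> D"
  shows "measure_pmf.prob (bind_pmf (pmf_of_set {..<(2::nat)^D}) (\<lambda>r. map_pmf (\<lambda>x. (r, x)) (F (r div 2^J))))
           {(r,x). g x = r div 2^K} \<le> 2^K / 2^J"
proof -
  let ?p = "pmf_of_set {..<(2::nat)^(D-J)}" and ?q = "pmf_of_set {..<(2::nat)^J}"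
  have "bind_pmf (pmf_of_set {..<(2::nat)^D}) (\<lambda>r. map_pmf (\<lambda>x. (r, x)) (F (r div 2^J))) =
        bind_pmf (pair_pmf ?p ?q) (\<lambda>hl. map_pmf (\<lambda>x. (fst hl*2^J+snd hl, x)) (F ((fst hl*2^J+snd hl) div 2^J)))"
    by (simp add: uniform_split[OF assms] bind_map_pmf split_def)
  also have "\<dots> = bind_pmf (pair_pmf ?p ?q) (\<lambda>hl. map_pmf (\<lambda>x. (fst hl*2^J+snd hl, x)) (F (fst hl)))"
  proof (rule bind_pmf_cong[OF refl])
    fix hl assume "hl \<in> set_pmf (pair_pmf ?p ?q)"
    then have "snd hl < 2^J" by (auto simp: set_pmf_of_set pow_ne)
    then have "(fst hl*2^J+snd hl) div 2^J = fst hl" by simp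
    then show "map_pmf (\<lambda>x. (fst hl*2^J+snd hl, x)) (F ((fst hl*2^J+snd hl) div 2^J)) =
               map_pmf (\<lambda>x. (fst hl*2^J+snd hl, x)) (F (fst hl))" by simp
  qed
  also have "\<dots> = bind_pmf ?p (\<lambda>h. bind_pmf ?q (\<lambda>l. map_pmf (\<lambda>x. (h*2^J+l, x)) (F h)))"
    by (simp add: pair_pmf_def bind_assoc_pmf bind_return_pmf)
  also have "\<dots> = bind_pmf ?p (\<lambda>h. bind_pmf (F h) (\<lambda>x. map_pmf (\<lambda>l. (h*2^J+l, x)) ?q))"
  proof (rule bind_pmf_cong[OF refl])
    fix h
    show "bind_pmf ?q (\<lambda>l. map_pmf (\<lambda>x. (h*2^J+l, x)) (F h)) =
          bind_pmf (F h) (\<lambda>x. map_pmf (\<lambda>l. (h*2^J+l, x)) ?q)"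
      unfolding map_pmf_def by (rule bind_commute_pmf)
  qed
  finally have eq: "bind_pmf (pmf_of_set {..<(2::nat)^D}) (\<lambda>r. map_pmf (\<lambda>x. (r, x)) (F (r div 2^J))) =
     bind_pmf ?p (\<lambda>h. bind_pmf (F h) (\<lambda>x. map_pmf (\<lambda>l. (h*2^J+l, x)) ?q))" .
  have c0: "0 \<le> (2::real)^K / 2^J" by simp
  show ?thesis unfolding eq
  proof (intro prob_bind_le c0)
    fix h x
    have "measure_pmf.prob (map_pmf (\<lambda>l. (h*2^J+l, x)) ?q) {(r,x). g x = r div 2^K}
          = measure_pmf.prob ?q {l. g x = (h*2^J+l) div 2^K}" by (simp add: vimage_def)
    also have "\<dots> = card ({..<(2::nat)^J} \<inter> {l. g x = (h*2^J+l) div 2^K}) / card {..<(2::nat)^J}"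
      by (rule measure_pmf_of_set) (simp_all add: pow_ne)
    also have "\<dots> \<le> 2^K / 2^J"
    proof -
      have "real (card ({..<(2::nat)^J} \<inter> {l. g x = (h*2^J+l) div 2^K})) \<le> 2^K"
        using card_div_bound[of J "g x" h K] by (metis of_nat_le_iff of_nat_numeral of_nat_power)
      then show ?thesis by (simp add: divide_right_mono)
    qed
    finally show "measure_pmf.prob (map_pmf (\<lambda>l. (h*2^J+l, x)) ?q) {(r,x). g x = r div 2^K} \<le> 2^K / 2^J" .
  qed
qed




definition exper :: "nat \<Rightarrow> nat \<Rightarrow> nat set \<Rightarrow> ((nat \<Rightarrow> nat) \<Rightarrow> nat pmf) \<Rightarrow> ((nat \<Rightarrow> nat) \<times> nat) pmf" where
  "exper e k T A = bind_pmf (G e k) (\<lambda>C. map_pmf (\<lambda>x. (C, x)) (A (restr C T)))"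

definition bad :: "nat \<Rightarrow> nat \<Rightarrow> nat set \<Rightarrow> ((nat \<Rightarrow> nat) \<times> nat) set" where
  "bad e k T = {(C,x). tr e k C x \<in> Some ` ({1..k} - T)}"

lemma restr_codeS:
  assumes "T \<subseteq> {1..Suc m}"
  shows "restr (codeS e m y r) T = restr (codeS e m (restr y (T - {Suc m})) r) T"
  unfolding restr_def codeS_def using assms by (intro ext) auto

lemma restr_codeS_dep:
  assumes "T \<subseteq> {1..m}" "\<And>i. i \<in> T \<Longrightarrow> J \<le> DD e m - 1 - y i"
  shows "restr (codeS e m y r) T = restr (codeS e m y (r div 2^J * 2^J)) T"
proof (rule ext)
  fix i
  have rr: "r div 2^J = (r div 2^J * 2^J) div 2^J" by simp
  show "restr (codeS e m y r) T i = restr (codeS e m y (r div 2^J * 2^J)) T i"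
  proof (cases "i \<in> T")
    case True
    then have "wcode (DD e m) r (y i) = wcode (DD e m) (r div 2^J * 2^J) (y i)"
      using wcode_dep[OF assms(2) rr] by blast
    then show ?thesis using True assms(1) unfolding restr_def codeS_def by auto
  next
    case False then show ?thesis unfolding restr_def by simp
  qed
qed

lemma prob_mono_supp:
  assumes "S \<inter> set_pmf p \<subseteq> S'"
  shows "measure_pmf.prob p S \<le> measure_pmf.prob p S'"
proof -
  have "measure_pmf.prob p S = measure_pmf.prob p (S \<inter> set_pmf p)" by (simp add: measure_Int_set_pmf)
  also have "\<dots> \<le> measure_pmf.prob p S'" using assms by (intro measure_pmf.finite_measure_mono) auto
  finally show ?thesis .
qed

lemma B1_bound:
  fixes y :: "nat \<Rightarrow> nat" and A :: "(nat \<Rightarrow> nat) \<Rightarrow> nat pmf"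
  assumes y: "y \<in> set_pmf (G e m)" and T: "T \<subseteq> {1..Suc m}" "Suc m \<notin> T"
  shows "measure_pmf.prob
           (bind_pmf (pmf_of_set {..<2^DD e m}) (\<lambda>r. map_pmf (\<lambda>x. (y, r, x)) (A (restr (codeS e m y r) T))))
           {(y',r,x). Max (insert 0 (y'`{1..m})) + (2^e-1) < DD e m - lvl r (x div 2^e)}
         \<le> 1 / 2^(2^e-1)"
proof -
  define D where "D = DD e m"
  define E where "E = 2^e - (1::nat)"
  define M where "M = Max (insert 0 (y`{1..m}))"
  define P where "P = bind_pmf (pmf_of_set {..<2^D}) (\<lambda>r. map_pmf (\<lambda>x. (y, r, x)) (A (restr (codeS e m y r) T)))"
  define S where "S = {(y'::nat\<Rightarrow>nat,r,x). Max (insert 0 (y'`{1..m})) + E < D - lvl r (x div 2^e)}"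
  have T': "T \<subseteq> {1..m}"
  proof
    fix i assume "i \<in> T"
    then have "i \<in> {1..Suc m}" "i \<noteq> Suc m" using T by blast+
    then show "i \<in> {1..m}" by auto
  qed
  have suppP: "set_pmf P \<subseteq> {(y',r,x). y' = y}" unfolding P_def by auto
  have main: "measure_pmf.prob P S \<le> 1 / 2^E"
  proof (cases "M + E < D")
    case False
    have "set_pmf P \<inter> S = {}" using suppP False unfolding S_def M_def by auto
    then have "measure_pmf.prob P S = 0" by (simp add: measure_pmf_zero_iff)
    then show ?thesis by simp
  next
    case True
    define K where "K = D - M - E - 1"
    define J where "J = K + E"
    have JD: "J \<le> D" unfolding J_def K_def using True by linarith
    have yM: "y i \<le> M" if "i \<in> {1..m}" for i
      unfolding M_def using that by (intro Max_ge) auto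
    have Jy: "J \<le> DD e m - 1 - y i" if "i \<in> T" for i
    proof -
      have "i \<in> {1..m}" using that T' by blast
      then have "y i \<le> M" by (rule yM)
      then show ?thesis using True unfolding J_def K_def D_def by linarith
    qed
    define F where "F = (\<lambda>h. A (restr (codeS e m y (h * 2^J)) T))"
    have PF: "P = map_pmf (\<lambda>(r,x). (y,r,x)) (bind_pmf (pmf_of_set {..<2^D}) (\<lambda>r. map_pmf (\<lambda>x. (r, x)) (F (r div 2^J))))"
    proof -
      have "P = bind_pmf (pmf_of_set {..<2^D}) (\<lambda>r. map_pmf (\<lambda>x. (y, r, x)) (F (r div 2^J)))"
        unfolding P_def
      proof (rule bind_pmf_cong[OF refl])
        fix r
        have "restr (codeS e m y r) T = restr (codeS e m y (r div 2^J * 2^J)) T"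
          by (rule restr_codeS_dep[OF T' Jy])
        then show "map_pmf (\<lambda>x. (y, r, x)) (A (restr (codeS e m y r) T)) =
                   map_pmf (\<lambda>x. (y, r, x)) (F (r div 2^J))" unfolding F_def by simp
      qed
      then show ?thesis by (simp add: map_bind_pmf map_pmf_comp)
    qed
    have "measure_pmf.prob P S = measure_pmf.prob (bind_pmf (pmf_of_set {..<2^D}) (\<lambda>r. map_pmf (\<lambda>x. (r, x)) (F (r div 2^J))))
           ((\<lambda>(r,x). (y,r,x)) -` S)" unfolding PF by simp
    also have "\<dots> \<le> measure_pmf.prob (bind_pmf (pmf_of_set {..<2^D}) (\<lambda>r. map_pmf (\<lambda>x. (r, x)) (F (r div 2^J))))
           {(r,x). x div 2^e div 2^K = r div 2^K}"
    proof (rule measure_pmf.finite_measure_mono)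
      show "(\<lambda>(r,x). (y,r,x)) -` S \<subseteq> {(r,x). x div 2^e div 2^K = r div 2^K}"
      proof clarify
        fix r x assume "(y, r, x) \<in> S"
        then have "M + E < D - lvl r (x div 2^e)" unfolding S_def M_def by simp
        then have "lvl r (x div 2^e) \<le> K" unfolding K_def by linarith
        then show "x div 2^e div 2^K = r div 2^K" using lvl_le_iff by blast
      qed
    qed simp
    also have "\<dots> \<le> 2^K / 2^J" by (rule guess_bound[OF JD])
    also have "\<dots> = 1 / 2^E" unfolding J_def by (simp add: power_add)
    finally show ?thesis .
  qed
  then show ?thesis unfolding P_def S_def D_def E_def .
qed


theorem sound:
  "T \<subseteq> {1..k} \<Longrightarrow> measure_pmf.prob (exper e k T A) (bad e k T) \<le> real k / 2^(2^e - 1)"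
proof (induction k arbitrary: T A)
  case 0
  have "bad e 0 T = {}" unfolding bad_def by simp
  then show ?case by simp
next
  case (Suc m)
  define D where "D = DD e m"
  define E where "E = 2^e - (1::nat)"
  define U where "U = pmf_of_set {..<(2::nat)^D}"
  define T' where "T' = T - {Suc m}"
  define zf where "zf = (\<lambda>r x. D - lvl r (x div 2^e))"
  define Mf where "Mf = (\<lambda>y::nat\<Rightarrow>nat. Max (insert 0 (y`{1..m})))"
  define Q where "Q = bind_pmf (G e m) (\<lambda>y. bind_pmf U (\<lambda>r. map_pmf (\<lambda>x. (y, r, x)) (A (restr (codeS e m y r) T))))"
  have ex: "exper e (Suc m) T A = map_pmf (\<lambda>(y,r,x). (codeS e m y r, x)) Q"
    unfolding exper_def Q_def U_def D_def by (simp add: bind_assoc_pmf bind_map_pmf map_bind_pmf map_pmf_comp)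
  define B1 where "B1 = {(y::nat\<Rightarrow>nat,r,x). Suc m \<notin> T \<and> Mf y + E < zf r x}"
  define B2 where "B2 = {(y,r,x). tr e m y (zf r x) \<in> Some ` ({1..m} - T')}"
  have sub: "(\<lambda>(y,r,x). (codeS e m y r, x)) -` bad e (Suc m) T \<inter> set_pmf Q \<subseteq> B1 \<union> B2"
  proof
    fix t assume tin: "t \<in> (\<lambda>(y,r,x). (codeS e m y r, x)) -` bad e (Suc m) T \<inter> set_pmf Q"
    obtain y r x where tt: "t = (y, r, x)" by (cases t) auto
    have b: "(y, r, x) \<in> (\<lambda>(y,r,x). (codeS e m y r, x)) -` bad e (Suc m) T" and q: "(y, r, x) \<in> set_pmf Q"
      using tin unfolding tt by auto
    have y: "y \<in> set_pmf (G e m)" and r: "r < 2^DD e m"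
      using q unfolding Q_def U_def D_def by (auto simp: set_pmf_of_set pow_ne)
    have tc: "tr e (Suc m) (codeS e m y r) x = (if Mf y + E < zf r x then Some (Suc m) else tr e m y (zf r x))"
      unfolding Mf_def E_def zf_def D_def by (rule tr_code[OF y r])
    have bb: "tr e (Suc m) (codeS e m y r) x \<in> Some ` ({1..Suc m} - T)" using b unfolding bad_def by simp
    show "t \<in> B1 \<union> B2"
    proof (cases "Mf y + E < zf r x")
      case True
      then have "Suc m \<notin> T" using bb tc by auto
      then show ?thesis using True unfolding B1_def tt by simp
    next
      case False
      then have t: "tr e m y (zf r x) \<in> Some ` ({1..Suc m} - T)" using bb tc by simp
      have "tr e m y (zf r x) \<in> insert None (Some ` {1..m})" by (rule tr_range)
      with t have "tr e m y (zf r x) \<in> Some ` ({1..m} - T')" unfolding T'_def by auto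
      then show ?thesis unfolding B2_def tt by simp
    qed
  qed
  have "measure_pmf.prob (exper e (Suc m) T A) (bad e (Suc m) T) =
        measure_pmf.prob Q ((\<lambda>(y,r,x). (codeS e m y r, x)) -` bad e (Suc m) T)"
    unfolding ex by simp
  also have "\<dots> \<le> measure_pmf.prob Q (B1 \<union> B2)" by (rule prob_mono_supp) (use sub in blast)
  also have "\<dots> \<le> measure_pmf.prob Q B1 + measure_pmf.prob Q B2"
    by (rule measure_subadditive) (auto simp: measure_pmf.emeasure_eq_measure)
  also have "measure_pmf.prob Q B1 \<le> 1 / 2^E"
  proof (cases "Suc m \<in> T")
    case True
    then have "B1 = {}" unfolding B1_def by simp
    then show ?thesis by simp
  next
    case False
    show ?thesis unfolding Q_def
    proof (rule prob_bind_le)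
      fix y assume y: "y \<in> set_pmf (G e m)"
      have "measure_pmf.prob (bind_pmf U (\<lambda>r. map_pmf (\<lambda>x. (y, r, x)) (A (restr (codeS e m y r) T)))) B1
         \<le> measure_pmf.prob (bind_pmf U (\<lambda>r. map_pmf (\<lambda>x. (y, r, x)) (A (restr (codeS e m y r) T))))
            {(y',r,x). Max (insert 0 (y'`{1..m})) + (2^e-1) < DD e m - lvl r (x div 2^e)}"
        by (rule measure_pmf.finite_measure_mono) (auto simp: B1_def Mf_def E_def zf_def D_def)
      also have "\<dots> \<le> 1 / 2^(2^e-1)" unfolding U_def D_def by (rule B1_bound[OF y Suc.prems False])
      finally show "measure_pmf.prob (bind_pmf U (\<lambda>r. map_pmf (\<lambda>x. (y, r, x)) (A (restr (codeS e m y r) T)))) B1 \<le> 1 / 2^E"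
        unfolding E_def .
    qed simp
  qed
  also have "measure_pmf.prob Q B2 \<le> real m / 2^E"
  proof -
    define A' where "A' = (\<lambda>v. bind_pmf U (\<lambda>r. map_pmf (zf r) (A (restr (codeS e m v r) T))))"
    have A'y: "A' (restr y T') = bind_pmf U (\<lambda>r. map_pmf (zf r) (A (restr (codeS e m y r) T)))" for y
      unfolding A'_def T'_def using restr_codeS[OF Suc.prems, of e y] by simp
    have mq: "map_pmf (\<lambda>(y,r,x). (y, zf r x)) Q = exper e m T' A'"
      unfolding Q_def exper_def by (simp add: A'y map_bind_pmf map_pmf_comp)
    have B2v: "B2 = (\<lambda>(y,r,x). (y, zf r x)) -` bad e m T'" unfolding B2_def bad_def by auto
    have T'sub: "T' \<subseteq> {1..m}" unfolding T'_def using Suc.prems by auto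
    have "measure_pmf.prob Q B2 = measure_pmf.prob (map_pmf (\<lambda>(y,r,x). (y, zf r x)) Q) (bad e m T')"
      unfolding B2v by simp
    also have "\<dots> = measure_pmf.prob (exper e m T' A') (bad e m T')" unfolding mq ..
    also have "\<dots> \<le> real m / 2^E" unfolding E_def by (rule Suc.IH[OF T'sub])
    finally show ?thesis .
  qed
  finally show ?case by (simp add: add_divide_distrib[symmetric] E_def)
qed




definition enc :: "nat \<Rightarrow> (nat \<Rightarrow> nat) \<Rightarrow> nat" where
  "enc n C = to_nat (map C [0..<Suc n])"

definition dec :: "nat \<Rightarrow> nat \<Rightarrow> (nat \<Rightarrow> nat)" where
  "dec n s = (\<lambda>i. if i \<le> n then (from_nat s :: nat list) ! i else 0)"

lemma dec_enc: "(\<forall>i. n < i \<longrightarrow> C i = 0) \<Longrightarrow> dec n (enc n C) = C"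
  unfolding dec_def enc_def by (rule ext) (auto simp: nth_map_upt simp del: upt_Suc)

definition Gen0 :: "nat \<Rightarrow> nat \<Rightarrow> (nat \<times> (nat \<Rightarrow> nat)) pmf" where
  "Gen0 e n = map_pmf (\<lambda>C. (enc n C, C)) (G e n)"

definition Trace0 :: "nat \<Rightarrow> nat \<Rightarrow> nat \<Rightarrow> nat \<Rightarrow> nat option pmf" where
  "Trace0 e n s x = return_pmf (tr e n (dec n s) x)"

lemma exper_supp: "(C, x) \<in> set_pmf (exper e k T A) \<Longrightarrow> C \<in> set_pmf (G e k)"
  unfolding exper_def by auto

lemma ipfc_exp:
  fixes A :: "(nat \<Rightarrow> nat) \<Rightarrow> nat pmf"
  shows "ipfc_experiment (Gen0 e n) (Trace0 e n) T A = map_pmf (\<lambda>(C,x). (C, x, tr e n C x)) (exper e n T A)"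
proof -
  have "ipfc_experiment (Gen0 e n) (Trace0 e n) T A =
        bind_pmf (G e n) (\<lambda>C. bind_pmf (A (restr C T)) (\<lambda>x. return_pmf (C, x, tr e n (dec n (enc n C)) x)))"
    unfolding ipfc_experiment_def Gen0_def Trace0_def by (simp add: bind_map_pmf bind_return_pmf)
  also have "\<dots> = bind_pmf (G e n) (\<lambda>C. bind_pmf (A (restr C T)) (\<lambda>x. return_pmf (C, x, tr e n C x)))"
  proof (rule bind_pmf_cong[OF refl])
    fix C assume "C \<in> set_pmf (G e n)"
    then have "dec n (enc n C) = C" using G_supp[of C e n] dec_enc by blast
    then show "bind_pmf (A (restr C T)) (\<lambda>x. return_pmf (C, x, tr e n (dec n (enc n C)) x)) =
               bind_pmf (A (restr C T)) (\<lambda>x. return_pmf (C, x, tr e n C x))" by simp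
  qed
  also have "\<dots> = map_pmf (\<lambda>(C,x). (C, x, tr e n C x)) (exper e n T A)"
    unfolding exper_def by (simp add: map_bind_pmf map_pmf_comp map_pmf_def[symmetric])
  finally show ?thesis .
qed

lemma construct:
  "is_ipfc n (NN e n) 0 (real n / 2^(2^e - 1)) (Gen0 e n) (Trace0 e n)"
  unfolding is_ipfc_def
proof (intro conjI allI impI)
  show "\<forall>(s, C)\<in>set_pmf (Gen0 e n). \<forall>i\<in>{1..n}. C i < NN e n"
    unfolding Gen0_def using G_supp by fastforce
  fix s x show "set_pmf (Trace0 e n s x) \<subseteq> insert None (Some ` {1..n})"
    unfolding Trace0_def using tr_range by simp
next
  fix T and A :: "(nat \<Rightarrow> nat) \<Rightarrow> nat pmf" assume TA: "T \<subseteq> {1..n} \<and> (\<forall>c. set_pmf (A c) \<subseteq> {..<NN e n})"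
  then have T: "T \<subseteq> {1..n}" by blast
  have "measure_pmf.prob (exper e n T A) {(C,x). tr e n C x = None \<and> feasible C T x} = 0"
    unfolding measure_pmf_zero_iff
  proof (rule ccontr)
    assume "set_pmf (exper e n T A) \<inter> {(C, x). tr e n C x = None \<and> feasible C T x} \<noteq> {}"
    then obtain C x where Cx: "(C,x) \<in> set_pmf (exper e n T A)" "tr e n C x = None" "feasible C T x" by auto
    obtain i j where ij: "i \<in> T" "j \<in> T" "C i \<le> x" "x \<le> C j" using Cx(3) unfolding feasible_def by blast
    have x2: "x \<le> C j + (2^e - 1)" using ij(4) by (rule trans_le_add1)
    have "i \<in> {1..n}" "j \<in> {1..n}" using ij T by auto
    then have "tr e n C x \<noteq> None"
      using tr_complete[OF exper_supp[OF Cx(1)] _ _ ij(3) x2] by blast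
    then show False using Cx(2) by simp
  qed
  then show "measure_pmf.prob (ipfc_experiment (Gen0 e n) (Trace0 e n) T A)
      {(C, x, t). t = None \<and> feasible C T x} \<le> 0"
    unfolding ipfc_exp by (simp add: vimage_def case_prod_unfold)
  have "measure_pmf.prob (ipfc_experiment (Gen0 e n) (Trace0 e n) T A)
      {(C, x, t). \<exists>i. t = Some i \<and> i \<in> {1..n} - T} = measure_pmf.prob (exper e n T A) (bad e n T)"
  proof -
    have seteq: "(\<lambda>(C,x). (C, x, tr e n C x)) -` {(C, x, t). \<exists>i. t = Some i \<and> i \<in> {1..n} - T} = bad e n T"
      unfolding bad_def by auto
    show ?thesis unfolding ipfc_exp measure_map_pmf seteq ..
  qed
  also have "\<dots> \<le> real n / 2^(2^e - 1)" by (rule sound[OF T])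
  finally show "measure_pmf.prob (ipfc_experiment (Gen0 e n) (Trace0 e n) T A)
      {(C, x, t). \<exists>i. t = Some i \<and> i \<in> {1..n} - T} \<le> real n / 2^(2^e - 1)" .
qed




lemma tower_add: "tower (a + b) x = tower a (tower b x)"
  by (induction a) auto

lemma tower_step: "tower k 1 < tower (Suc k) 1"
  by (simp add: less_exp)

lemma tower_mono: "a \<le> b \<Longrightarrow> tower a 1 \<le> tower b 1"
proof (induction b)
  case 0 then show ?case by simp
next
  case (Suc b)
  show ?case
  proof (cases "a = Suc b")
    case False
    then have "a \<le> b" using Suc.prems by simp
    then show ?thesis using Suc.IH tower_step[of b] by linarith
  qed simp
qed

lemma tower_ge: "k \<le> tower k 1"
proof (induction k)
  case 0 then show ?case by simp
next
  case (Suc k) then show ?case using tower_step[of k] by linarith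
qed

lemma tower_pos: "1 \<le> tower k 1"
  using tower_mono[of 0 k] by simp

lemma iter_log_le: "((\<lambda>y. log 2 y) ^^ j) y \<le> 1 \<Longrightarrow> y \<le> real (tower j 1)"
proof (induction j arbitrary: y)
  case 0 then show ?case by simp
next
  case (Suc j)
  have "((\<lambda>y. log 2 y) ^^ j) (log 2 y) \<le> 1" using Suc.prems by (simp add: funpow_Suc_right del: funpow.simps)
  then have l: "log 2 y \<le> real (tower j 1)" by (rule Suc.IH)
  show ?case
  proof (cases "y > 0")
    case True
    then have "y = 2 powr (log 2 y)" by simp
    also have "\<dots> \<le> 2 powr (real (tower j 1))" using l by (intro powr_mono) auto
    also have "\<dots> = real (tower (Suc j) 1)" by (simp add: powr_realpow)
    finally show ?thesis .
  next
    case False then show ?thesis by (smt (verit) of_nat_0_le_iff)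
  qed
qed

lemma iter_log_ex: "0 < y \<Longrightarrow> y \<le> real (tower k 1) \<Longrightarrow> \<exists>j. ((\<lambda>y. log 2 y) ^^ j) y \<le> 1"
proof (induction k arbitrary: y)
  case 0 then show ?case by (intro exI[of _ 0]) simp
next
  case (Suc k)
  show ?case
  proof (cases "y \<le> 1")
    case True then show ?thesis by (intro exI[of _ 0]) simp
  next
    case False
    then have lp: "0 < log 2 y" by simp
    have "y \<le> 2 powr (real (tower k 1))" using Suc.prems(2) by (simp add: powr_realpow)
    then have "log 2 y \<le> real (tower k 1)" using Suc.prems(1) by (simp add: log_le_iff)
    then obtain j where "((\<lambda>y. log 2 y) ^^ j) (log 2 y) \<le> 1" using Suc.IH[OF lp] by blast
    then have "((\<lambda>y. log 2 y) ^^ Suc j) y \<le> 1" by (simp add: funpow_Suc_right del: funpow.simps)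
    then show ?thesis by blast
  qed
qed

lemma log_star_bound:
  assumes "0 < y"
  shows "y \<le> real (tower (log_star y) 1)"
proof -
  define k where "k = nat \<lceil>y\<rceil>"
  have "y \<le> real k" unfolding k_def by linarith
  also have "\<dots> \<le> real (tower k 1)" using tower_ge[of k] by simp
  finally have "\<exists>j. ((\<lambda>y. log 2 y) ^^ j) y \<le> 1" by (rule iter_log_ex[OF assms])
  then have "((\<lambda>y. log 2 y) ^^ log_star y) y \<le> 1" unfolding log_star_def by (rule LeastI_ex)
  then show ?thesis by (rule iter_log_le)
qed

lemma NN_pos: "1 \<le> NN e k"
  by (cases k) auto

lemma size_bound:
  assumes c: "c = (2^e - 1) + e" and cK: "c + 2 \<le> tower K 1"
  shows "NN e k + c + 1 \<le> tower (k + K) 1"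
proof (induction k)
  case 0 then show ?case using cK by simp
next
  case (Suc k)
  define T where "T = tower (k + K) 1"
  define a where "a = NN e k + c"
  have aa: "NN e k + (2^e - 1) + e = a" unfolding a_def c by (simp only: add.assoc)
  have NS: "NN e (Suc k) = 2^a" by (simp only: NN.simps aa)
  have aT: "a + 1 \<le> T" using Suc.IH unfolding a_def T_def by simp
  have ca: "c + 1 \<le> a" using NN_pos[of e k] unfolding a_def by simp
  have "a < 2^a" by (rule less_exp)
  then have c2: "c + 1 \<le> 2^a" using ca by linarith
  have "(2::nat)^(a+1) \<le> 2^T" using aT by (intro power_increasing) auto
  then have "2^a + c + 1 \<le> (2::nat)^T" using c2 by simp
  then show ?case unfolding NS T_def by simp
qed

lemma pow_ge_lin: "4 \<le> Y \<Longrightarrow> 3 * Y + 2 \<le> (2::nat)^Y"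
proof (induction Y rule: dec_induct)
  case base then show ?case by simp
next
  case (step Y) then show ?case by simp
qed

lemma is_ipfc_mono:
  assumes "is_ipfc n N \<gamma> a Gn Tr" "a \<le> b"
  shows "is_ipfc n N \<gamma> b Gn Tr"
  using assms unfolding is_ipfc_def by (meson order_trans)

lemma final_case:
  assumes cK: "(2^e - 1) + e + 2 \<le> tower K 1" and s: "real n / 2^(2^e - 1) \<le> \<xi>"
  shows "\<exists>N (Gen :: (nat \<times> (nat \<Rightarrow> nat)) pmf) Trace. N \<le> tower (n + K) 1 \<and> is_ipfc n N 0 \<xi> Gen Trace"
proof (intro exI conjI)
  show "NN e n \<le> tower (n + K) 1" using size_bound[OF refl cK, of n] by simp
  show "is_ipfc n (NN e n) 0 \<xi> (Gen0 e n) (Trace0 e n)" by (rule is_ipfc_mono[OF construct s])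
qed




lemma trivial_code:
  assumes "n = 0 \<or> 1 \<le> \<xi>" and pos: "0 < \<xi>"
  shows "is_ipfc n 1 0 \<xi> (return_pmf (0::nat, \<lambda>_. 0::nat))
           (\<lambda>s x. return_pmf (if x = 0 \<and> 1 \<le> n then Some 1 else None))"
  unfolding is_ipfc_def
proof (intro conjI allI impI)
  show "\<forall>(s, C)\<in>set_pmf (return_pmf (0::nat, \<lambda>_. 0::nat)). \<forall>i\<in>{1..n}. C i < 1" by simp
  fix s x show "set_pmf (return_pmf (if x = 0 \<and> 1 \<le> n then Some 1 else None)) \<subseteq> insert None (Some ` {1..n})"
    by auto
next
  fix T and A :: "(nat \<Rightarrow> nat) \<Rightarrow> nat pmf"
  assume TA: "T \<subseteq> {1..n} \<and> (\<forall>c. set_pmf (A c) \<subseteq> {..<1})"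
  let ?P = "ipfc_experiment (return_pmf (0::nat, \<lambda>_. 0::nat)) (\<lambda>s x. return_pmf (if x = 0 \<and> 1 \<le> n then Some 1 else None)) T A"
  have supp: "set_pmf ?P \<subseteq> {((\<lambda>_. 0), 0, if 1 \<le> n then Some 1 else None)}"
  proof -
    have "set_pmf (A (restr (\<lambda>_. 0) T)) \<subseteq> {0}" using TA by auto
    then show ?thesis unfolding ipfc_experiment_def by auto
  qed
  have "set_pmf ?P \<inter> {(C, x, t). t = None \<and> feasible C T x} = {}"
  proof (cases "1 \<le> n")
    case True then show ?thesis using supp by auto
  next
    case False
    then have "T = {}" using TA by auto
    then show ?thesis unfolding feasible_def by auto
  qed
  then show "measure_pmf.prob ?P {(C, x, t). t = None \<and> feasible C T x} \<le> 0"
    by (simp add: measure_pmf_zero_iff[symmetric])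
  show "measure_pmf.prob ?P {(C, x, t). \<exists>i. t = Some i \<and> i \<in> {1..n} - T} \<le> \<xi>"
  proof (cases "1 \<le> \<xi>")
    case True then show ?thesis using measure_pmf.prob_le_1 order_trans by blast
  next
    case False
    then have "n = 0" using assms by simp
    then have emp: "{(C, x, t). \<exists>i. t = Some i \<and> i \<in> {1..n} - T} = ({} :: ((nat\<Rightarrow>nat) \<times> nat \<times> nat option) set)"
      by auto
    show ?thesis unfolding emp using pos by simp
  qed
qed

theorem lemmaB4:
  fixes n :: nat and \<xi> :: real
  assumes "\<xi> > 0"
  shows "\<exists>N (Gen :: (nat \<times> (nat \<Rightarrow> nat)) pmf) Trace.
           N \<le> tower (n + log_star (2 * real n ^ 2 / \<xi>)) 1 \<and>
           is_ipfc n N 0 \<xi> Gen Trace"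
proof (cases "n = 0 \<or> 1 \<le> \<xi>")
  case True
  show ?thesis
    by (intro exI conjI) (rule tower_pos, rule trivial_code[OF True assms])
next
  case False
  then have n1: "1 \<le> n" and xi1: "\<xi> < 1" by auto
  define y0 where "y0 = 2 * real n ^ 2 / \<xi>"
  define K where "K = log_star y0"
  define X where "X = tower K 1"
  have nn: "real n \<le> real n ^ 2" using n1 by (simp add: power2_eq_square)
  have n2: "1 \<le> real n ^ 2" using n1 nn by linarith
  have y02: "2 < y0" unfolding y0_def using assms xi1 n2 by (simp add: pos_less_divide_eq)
  have yX: "y0 \<le> real X" unfolding X_def K_def by (rule log_star_bound) (use y02 in linarith)
  have key: "2 * real n ^ 2 \<le> real X * \<xi>" using yX assms unfolding y0_def by (simp add: pos_divide_le_eq)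
  have K2: "2 \<le> K"
  proof (rule ccontr)
    assume "\<not> 2 \<le> K"
    then have "K = 0 \<or> K = 1" by auto
    then have "X \<le> 2" unfolding X_def by auto
    then show False using yX y02 by linarith
  qed
  show ?thesis
  proof (cases "K = 2")
    case True
    then have X4: "X = 4" unfolding X_def by (simp add: numeral_eq_Suc)
    have cK: "(2^1 - 1) + 1 + 2 \<le> tower K 1" using X4 unfolding X_def by simp
    have k4: "2 * real n ^ 2 \<le> 4 * \<xi>" using key X4 by simp
    have "real n \<le> 2 * \<xi>" using k4 nn by linarith
    then have s: "real n / 2^(2^1 - 1) \<le> \<xi>" by simp
    show ?thesis unfolding y0_def[symmetric] K_def[symmetric] by (rule final_case[OF cK s])
  next
    case False
    then have K3: "3 \<le> K" using K2 by simp
    define w where "w = tower (K-2) 1"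
    define Y where "Y = tower (K-1) 1"
    have k1: "K - 1 = Suc (K - 2)" using K3 by simp
    have k2: "K = Suc (K - 1)" using K3 by simp
    have Yw: "Y = 2^w" unfolding Y_def w_def k1 by (simp only: tower.simps)
    have XY: "X = 2^Y" unfolding X_def Y_def by (subst k2) (simp only: tower.simps)
    have Y4: "4 \<le> Y" unfolding Y_def using tower_mono[of 2 "K-1"] K3 by (simp add: numeral_eq_Suc)
    have wY: "w < Y" unfolding Yw by (rule less_exp)
    define e where "e = w + 1"
    have e2: "(2::nat)^e = 2 * Y" unfolding e_def Yw by simp
    have cK: "(2^e - 1) + e + 2 \<le> tower K 1"
    proof -
      have ee: "e = w + 1" by (rule e_def)
      have "(2^e - 1) + e + 2 = 2 * Y + w + 2" using e2 Y4 ee by linarith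
      also have "\<dots> \<le> 3 * Y + 2" using wY by simp
      also have "\<dots> \<le> 2^Y" by (rule pow_ge_lin[OF Y4])
      finally show ?thesis unfolding X_def[symmetric] XY .
    qed
    have s: "real n / 2^(2^e - 1) \<le> \<xi>"
    proof -
      have "Y \<le> 2^e - 1" using e2 Y4 by linarith
      then have "(2::nat)^Y \<le> 2^(2^e - 1)" by (intro power_increasing) auto
      then have XE: "real X \<le> 2^(2^e - 1)" unfolding XY by (metis of_nat_le_iff of_nat_numeral of_nat_power)
      have Xp: "0 < real X" using yX y02 by linarith
      have "real n \<le> real X * \<xi>" using key nn n2 by linarith
      then have "real n / real X \<le> \<xi>" using Xp by (simp add: divide_le_eq mult.commute)
      moreover have "real n / 2^(2^e - 1) \<le> real n / real X"
        using XE Xp by (intro divide_left_mono) auto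
      ultimately show ?thesis by linarith
    qed
    show ?thesis unfolding y0_def[symmetric] K_def[symmetric] by (rule final_case[OF cK s])
  qed
qed


end
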